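(* Let $R$ be a ring and let $n\geq 2$ be a fixed integer. If $x^n-x$ is nilpotent for every $x\in R$, then $R$ is D-regularly nil clean.
   Context: All rings are associative with identity $1\neq 0$. A ring $R$ is called D-regularly nil clean if for each $a\in R$ there exists an idempotent $e\in aRa$ such that $a(1-e)$ is nilpotent. *)

theory Defs
  imports Main
begin

definition nilpotent :: "'a::ring_1 \<Rightarrow> bool" where
  "nilpotent a \<longleftrightarrow> (\<exists>k::nat. a ^ k = 0)"

definition idempotent :: "'a::ring_1 \<Rightarrow> bool" where
  "idempotent e \<longleftrightarrow> e * e = e"

definition corner :: "'a::ring_1 \<Rightarrow> 'a set" where
  "corner a = {a * r * a | r. True}"

definition D_regularly_nil_clean :: "'a::ring_1 itself \<Rightarrow> bool" where
  "D_regularly_nil_clean _ \<longleftrightarrow>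
     (\<forall>a::'a. \<exists>e. e \<in> corner a \<and> idempotent e \<and> nilpotent (a * (1 - e)))"

end

theory Submission
  imports Defs
begin

lemma comm_pow_mult:
  fixes x y :: "'a::monoid_mult"
  assumes "x * y = y * x"
  shows "(x * y) ^ m = x ^ m * y ^ m"
proof (induction m)
  case 0 then show ?case by simp
next
  case (Suc m)
  have "(x * y) ^ Suc m = x * y * (x ^ m * y ^ m)" using Suc by (simp only: power_Suc)
  also have "\<dots> = x * ((y * x ^ m) * y ^ m)" by (simp only: mult.assoc)
  also have "y * x ^ m = x ^ m * y"
    using power_commuting_commutes[of x y m] assms by simp
  also have "x * ((x ^ m * y) * y ^ m) = (x * x ^ m) * (y * y ^ m)"
    by (simp only: mult.assoc)
  also have "\<dots> = x ^ Suc m * y ^ Suc m" by (simp only: power_Suc)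
  finally show ?case .
qed

lemma c_form:
  fixes a :: "'a::ring_1"
  shows "\<exists>g. g * a = a * g \<and> (1 - a ^ p) ^ j = 1 - a ^ p * g"
proof (induction j)
  case 0 then show ?case by (intro exI[of _ 0]) simp
next
  case (Suc j)
  then obtain g where g: "g * a = a * g" "(1 - a ^ p) ^ j = 1 - a ^ p * g" by blast
  define g' where "g' = 1 + g - g * a ^ p"
  have gpa: "g * a ^ p * a = a * g * a ^ p"
  proof -
    have "g * a ^ p * a = g * (a ^ p * a)" by (simp only: mult.assoc)
    also have "a ^ p * a = a * a ^ p" by (rule power_commutes)
    also have "g * (a * a ^ p) = (g * a) * a ^ p" by (simp only: mult.assoc)
    also have "\<dots> = a * g * a ^ p" by (simp only: g(1))
    finally show ?thesis .
  qed
  have "g' * a = a * g'"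
    unfolding g'_def using g(1) gpa
    by (simp add: distrib_left distrib_right left_diff_distrib right_diff_distrib mult.assoc)
  moreover have "(1 - a ^ p) ^ Suc j = 1 - a ^ p * g'"
    unfolding g'_def power_Suc2 g(2)
    by (simp add: algebra_simps)
  ultimately show ?case by blast
qed

lemma an: "(n::nat) \<ge> 2 \<Longrightarrow> (a::'a::ring_1) ^ n = a * a ^ (n - 1)"
  by (cases n) (simp_all)
lemma an1: "(n::nat) \<ge> 2 \<Longrightarrow> (a::'a::ring_1) ^ (n - 1) = a * a ^ (n - 2)"
proof -
  assume "n \<ge> 2" then obtain m where "n = Suc (Suc m)" by (metis add_2_eq_Suc le_Suc_ex)
  thus ?thesis by simp
qed

theorem corollary2p8:
  fixes n :: nat
  assumes "(1::'a::ring_1) \<noteq> 0"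
    and "n \<ge> 2"
    and "\<forall>x::'a. nilpotent (x ^ n - x)"
  shows "D_regularly_nil_clean TYPE('a)"
  unfolding D_regularly_nil_clean_def
proof
  fix a :: 'a
  obtain k0 where k0: "(a ^ n - a) ^ k0 = 0"
    using assms(3) unfolding nilpotent_def by blast
  define k where "k = k0 + 2"
  have k2: "k \<ge> 2" unfolding k_def by simp
  have nk: "(a ^ n - a) ^ k = 0" unfolding k_def power_add k0 by simp
  have an: "a ^ n = a * a ^ (n - 1)" using an[OF assms(2)] .
  have "(- (a ^ n - a)) ^ k = 0" using nk power_minus[of "a ^ n - a" k] by simp
  moreover have "- (a ^ n - a) = a * (1 - a ^ (n - 1))" using an by (simp add: right_diff_distrib)
  ultimately have "(a * (1 - a ^ (n - 1))) ^ k = 0" by simp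
  moreover have "a * (1 - a ^ (n - 1)) = (1 - a ^ (n - 1)) * a"
    by (simp add: right_diff_distrib left_diff_distrib power_commutes)
  ultimately have z: "a ^ k * (1 - a ^ (n - 1)) ^ k = 0" using comm_pow_mult by metis
  obtain g where g: "g * a = a * g" "(1 - a ^ (n - 1)) ^ k = 1 - a ^ (n - 1) * g"
    using c_form by blast
  define h where "h = a ^ (n - 2) * g"
  have ha: "h * a = a * h" unfolding h_def using g(1)
    by (simp only: mult.assoc g(1)) (simp only: mult.assoc[symmetric] power_commutes)
  have an1: "a ^ (n - 1) = a * a ^ (n - 2)" using an1[OF assms(2)] .
  have key: "a ^ k = a ^ (k + 1) * h"
  proof -
    have "a ^ k * (1 - a ^ (n - 1) * g) = 0" using z g(2) by simp
    hence "a ^ k = a ^ k * (a ^ (n - 1) * g)" by (simp add: right_diff_distrib)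
    also have "\<dots> = a ^ (k + 1) * h" unfolding h_def an1
      by (metis mult.assoc power_Suc2 Suc_eq_plus1)
    finally show ?thesis .
  qed
  have hp: "\<And>j m. h ^ j * a ^ m = a ^ m * h ^ j"
  proof -
    fix j m
    have "h * a ^ m = a ^ m * h" using power_commuting_commutes[of a h m] ha by simp
    thus "h ^ j * a ^ m = a ^ m * h ^ j" using power_commuting_commutes[of h "a ^ m" j] by simp
  qed
  have iter: "\<And>j. a ^ k = a ^ (k + j) * h ^ j"
  proof -
    fix j show "a ^ k = a ^ (k + j) * h ^ j"
    proof (induction j)
      case 0 then show ?case by simp
    next
      case (Suc j)
      have e1: "a ^ (k + Suc j) = a ^ j * a ^ (k + 1)"
        by (metis add.commute add_Suc_right Suc_eq_plus1 power_add)
      have "a ^ (k + Suc j) * h ^ Suc j = a ^ j * (a ^ (k + 1) * h) * h ^ j"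
        unfolding e1 power_Suc by (simp only: mult.assoc)
      also have "\<dots> = a ^ (k + j) * h ^ j"
        unfolding key[symmetric] by (simp only: power_add add.commute)
      finally show ?case using Suc by simp
    qed
  qed
  define e where "e = a ^ k * h ^ k"
  have e2: "e * e = e"
  proof -
    have "e * e = a ^ k * (h ^ k * a ^ k) * h ^ k" unfolding e_def by (simp only: mult.assoc)
    also have "\<dots> = a ^ k * (a ^ k * h ^ k) * h ^ k" by (simp only: hp)
    also have "\<dots> = a ^ (k + k) * h ^ k * h ^ k" by (simp only: power_add mult.assoc)
    also have "\<dots> = a ^ k * h ^ k" by (simp only: iter[of k, symmetric])
    finally show ?thesis unfolding e_def .
  qed
  have akk: "a ^ k = a * a ^ k0 * a" unfolding k_def
    by (metis numeral_2_eq_2 add_Suc_right add_0_right power_Suc power_Suc2 mult.assoc)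
  have hk1: "h ^ k * a = a * h ^ k" using hp[of k 1] by simp
  have ec: "e \<in> corner a"
  proof -
    have "e = a * (a ^ k0 * h ^ k) * a" unfolding e_def akk
      by (simp only: mult.assoc hk1)
    thus ?thesis unfolding corner_def by blast
  qed
  have ea: "e * a = a * e" unfolding e_def
    by (simp only: mult.assoc hk1) (simp only: mult.assoc[symmetric] power_commutes)
  have ea2: "a * (1 - e) = (1 - e) * a" using ea by (simp add: right_diff_distrib left_diff_distrib)
  have "(a * (1 - e)) ^ k = a ^ k * (1 - e) ^ k"
    using comm_pow_mult[OF ea2] .
  also have "(1 - e) ^ k = 1 - e"
  proof -
    have "\<And>j. (1 - e) ^ Suc j = 1 - e"
    proof -
      fix j show "(1 - e) ^ Suc j = 1 - e"
      proof (induction j)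
        case 0 then show ?case by simp
      next
        case (Suc j)
        have "(1 - e) ^ Suc (Suc j) = (1 - e) * (1 - e)" using Suc by (simp only: power_Suc)
        also have "\<dots> = 1 - e" using e2 by (simp add: right_diff_distrib left_diff_distrib)
        finally show ?case .
      qed
    qed
    thus ?thesis unfolding k_def by (metis add_2_eq_Suc')
  qed
  also have "a ^ k * (1 - e) = 0"
  proof -
    have "a ^ k * e = a ^ (k + k) * h ^ k" unfolding e_def by (simp only: power_add mult.assoc)
    hence "a ^ k * e = a ^ k" using iter[of k] by simp
    thus ?thesis by (simp add: right_diff_distrib)
  qed
  finally have "nilpotent (a * (1 - e))" unfolding nilpotent_def by blast
  thus "\<exists>e. e \<in> corner a \<and> idempotent e \<and> nilpotent (a * (1 - e))"
    using ec e2 unfolding idempotent_def by blast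
qed

end
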